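(* Let $r\ge1$, $\mu\in\mathcal P_r$, and let $\mathbf x_n\in\Xi_n$ for every $n\in\mathbb N$. Let $d_r(\delta^\bullet_{\mathbf x_n},\mu)=\min_{\mathbf p\in\Pi_n}d_r(\delta^{\mathbf p}_{\mathbf x_n},\mu)$. Then $\lim_{n\to\infty}d_r(\delta^\bullet_{\mathbf x_n},\mu)=0$ if and only if $$\lim_{n\to\infty}\min_{1\le i\le n}|x-x_{n,i}|=0\quad\text{for every }x\in{\rm supp}\,\mu .$$ In particular, this condition holds whenever $\lim_{n\to\infty}\big(F_\mu(x_{n,1})+\max_{1\le i\le n-1}(x_{n,i+1}-x_{n,i})+1-F_\mu(x_{n,n})\big)=0$.
   Context: $\mathcal P$ denotes the set of Borel probability measures on $\mathbb R$; $\mathcal P_r=\{\mu\in\mathcal P:\int|x|^r{\rm d}\mu(x)<\infty\}$. For $\mu\in\mathcal P$, $F_\mu(x)=\mu(]-\infty,x])$ and $F_\mu^{-1}(t)=\sup\{x: F_\mu(x)\le t\}$, $t\in]0,1[$; ${\rm supp}\,\mu$ is the support (smallest closed set of full measure). $d_r(\mu,\nu)=\big(\int_0^1|F_\mu^{-1}(t)-F_\nu^{-1}(t)|^r{\rm d}t\big)^{1/r}$ on $\mathcal P_r$. $\Xi_n=\{\mathbf x\in\mathbb R^n:x_1\le\dots\le x_n\}$, $\Pi_n=\{\mathbf p\in\mathbb R^n:p_i\ge0,\sum_ip_i=1\}$, $\delta^{\mathbf p}_{\mathbf x}=\sum_{i=1}^np_i\delta_{x_i}$; the minimum over $\Pi_n$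 is attained. *)

theory Defs
  imports "HOL-Probability.Probability"
begin

definition prob_real :: "real measure \<Rightarrow> bool" where
  "prob_real M \<longleftrightarrow> prob_space M \<and> sets M = sets borel"

definition prob_moment :: "real \<Rightarrow> real measure \<Rightarrow> bool" where
  "prob_moment r M \<longleftrightarrow> prob_real M \<and> integrable M (\<lambda>x. \<bar>x\<bar> powr r)"

definition cdf_of :: "real measure \<Rightarrow> real \<Rightarrow> real" where
  "cdf_of M x = measure M {..x}"

definition quantile_of :: "real measure \<Rightarrow> real \<Rightarrow> real" where
  "quantile_of M t = Sup {x. cdf_of M x \<le> t}"

definition supp_of :: "real measure \<Rightarrow> real set" where
  "supp_of M = \<Inter> {S. closed S \<and> S \<in> sets M \<and> measure M (space M - S) = 0}"

text \<open>The L^r-Wasserstein distance d_r via quantile functions.\<close>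
definition dist_r :: "real \<Rightarrow> real measure \<Rightarrow> real measure \<Rightarrow> real" where
  "dist_r r M N =
     (LINT t:{0<..<1}|lborel. \<bar>quantile_of M t - quantile_of N t\<bar> powr r) powr (1 / r)"

definition Xi :: "nat \<Rightarrow> (nat \<Rightarrow> real) set" where
  "Xi n = {x. \<forall>i j. 1 \<le> i \<longrightarrow> i \<le> j \<longrightarrow> j \<le> n \<longrightarrow> x i \<le> x j}"

definition Pi_simplex :: "nat \<Rightarrow> (nat \<Rightarrow> real) set" where
  "Pi_simplex n = {p. (\<forall>i\<in>{1..n}. p i \<ge> 0) \<and> (\<Sum>i=1..n. p i) = 1}"

definition delta_meas :: "nat \<Rightarrow> (nat \<Rightarrow> real) \<Rightarrow> (nat \<Rightarrow> real) \<Rightarrow> real measure" where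
  "delta_meas n p x = measure_of UNIV (sets borel)
      (\<lambda>A. \<Sum>i=1..n. ennreal (p i) * indicator A (x i))"

text \<open>Best approximation by measures supported on the points x_1..x_n
  (the minimum over Pi_n is attained, so it equals the infimum).\<close>
definition dist_r_best :: "real \<Rightarrow> nat \<Rightarrow> (nat \<Rightarrow> real) \<Rightarrow> real measure \<Rightarrow> real" where
  "dist_r_best r n x M = (INF p \<in> Pi_simplex n. dist_r r (delta_meas n p x) M)"

end

theory Submission
  imports Defs
begin


lemma cdf_of_eq: "cdf_of M = cdf M"
  by (simp add: cdf_of_def cdf_def fun_eq_iff)

lemma prob_real_rd: "prob_real M \<Longrightarrow> real_distribution M"
  unfolding prob_real_def real_distribution_def real_distribution_axioms_def by simp

context real_distribution begin

lemma S_ne: assumes "0 < t" shows "\<exists>x. cdf M x \<le> t"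
proof -
  have "eventually (\<lambda>x. cdf M x < t) at_bot"
    using order_tendstoD(2)[OF cdf_lim_at_bot assms] .
  then obtain b where "\<And>x. x \<le> b \<Longrightarrow> cdf M x < t" by (auto simp: eventually_at_bot_linorder)
  then show ?thesis by (meson less_imp_le order_refl)
qed

lemma S_bdd: assumes "t < 1" shows "bdd_above {x. cdf M x \<le> t}"
proof -
  have "eventually (\<lambda>x. cdf M x > t) at_top"
    using order_tendstoD(1)[OF cdf_lim_at_top_prob assms] .
  then obtain b where b: "\<And>x. x \<ge> b \<Longrightarrow> cdf M x > t" by (auto simp: eventually_at_top_linorder)
  show ?thesis
  proof (rule bdd_aboveI[of _ b])
    fix x assume "x \<in> {x. cdf M x \<le> t}"
    then show "x \<le> b" using b[of x] by (cases "x \<ge> b") auto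
  qed
qed

lemma Q_ge: assumes "0 < t" "t < 1" "cdf M x \<le> t" shows "x \<le> quantile_of M t"
  unfolding quantile_of_def cdf_of_eq using assms S_bdd by (auto intro!: cSup_upper)

lemma Q_le: assumes "0 < t" "t < 1" "cdf M x > t" shows "quantile_of M t \<le> x"
  unfolding quantile_of_def cdf_of_eq
proof (rule cSup_least)
  show "{x. cdf M x \<le> t} \<noteq> {}" using S_ne[OF assms(1)] by auto
  fix s assume "s \<in> {x. cdf M x \<le> t}"
  then have "cdf M s < cdf M x" using assms by auto
  then show "s \<le> x" using cdf_nondecreasing by (meson linorder_not_le less_le_not_le)
qed

lemma Q_gt: assumes "0 < t" "t < 1" "x > quantile_of M t" shows "cdf M x > t"
  using Q_ge[OF assms(1,2), of x] assms(3) by fastforce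

lemma Q_lt: assumes "0 < t" "t < 1" "x < quantile_of M t" shows "cdf M x \<le> t"
  using Q_le[OF assms(1,2), of x] assms(3) by fastforce

lemma Q_mono: "mono_on {0<..<1} (quantile_of M)"
proof (rule mono_onI)
  fix s t :: real assume st: "s \<in> {0<..<1}" "t \<in> {0<..<1}" "s \<le> t"
  show "quantile_of M s \<le> quantile_of M t"
  proof (rule ccontr)
    assume "\<not> ?thesis"
    then obtain z where z: "quantile_of M t < z" "z < quantile_of M s" using dense by (meson not_le)
    have "cdf M z > t" using Q_gt z st by auto
    moreover have "cdf M z \<le> s" using Q_lt z st by auto
    ultimately show False using st by auto
  qed
qed

lemma Q_gap:
  assumes const: "\<And>u v. u \<in> {a<..<b} \<Longrightarrow> v \<in> {a<..<b} \<Longrightarrow> cdf M u = cdf M v"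
    and t: "0 < t" "t < 1"
  shows "quantile_of M t \<notin> {a<..<b}"
proof
  let ?z = "quantile_of M t"
  assume z: "?z \<in> {a<..<b}"
  show False
  proof (cases "cdf M ?z \<le> t")
    case True
    define w where "w = (?z + b) / 2"
    have "w \<in> {a<..<b}" "w > ?z" using z by (auto simp: w_def)
    then have "cdf M w \<le> t" using const[OF z] True by auto
    then have "w \<le> ?z" using Q_ge t by auto
    then show False using \<open>w > ?z\<close> by auto
  next
    case False
    define w where "w = (?z + a) / 2"
    have "w \<in> {a<..<b}" "w < ?z" using z by (auto simp: w_def)
    then have "cdf M w > t" using const[OF z] False by auto
    then have "?z \<le> w" using Q_le t by auto
    then show False using \<open>w < ?z\<close> by auto
  qed
qed

end


abbreviation "\<Omega> \<equiv> restrict_space lborel {0<..<1::real}"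

lemma LINT_eq: "(LINT t:{0<..<1}|lborel. f t) = integral\<^sup>L \<Omega> (f::real\<Rightarrow>real)"
  unfolding set_lebesgue_integral_def using integral_restrict_space[of "{0<..<1::real}" lborel f] by simp

lemma sets_Omega: "sets \<Omega> = sets (restrict_space borel {0<..<1})"
  by (simp add: sets_restrict_space)

context real_distribution begin

lemma not_supp_null:
  assumes "z \<notin> supp_of M"
  shows "\<exists>e>0. measure M {z-e<..<z+e} = 0"
proof -
  obtain S where S: "closed S" "S \<in> sets M" "measure M (space M - S) = 0" "z \<notin> S"
    using assms unfolding supp_of_def by auto
  have "open (- S)" using S(1) by auto
  then obtain e where e: "e > 0" "ball z e \<subseteq> - S" using S(4) by (meson ComplI open_contains_ball)
  have sub: "{z-e<..<z+e} \<subseteq> space M - S"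
  proof
    fix x assume "x \<in> {z-e<..<z+e}"
    then have "x \<in> ball z e" by (auto simp: dist_real_def)
    then show "x \<in> space M - S" using e by auto
  qed
  have "measure M {z-e<..<z+e} \<le> measure M (space M - S)"
    by (rule finite_measure_mono[OF sub]) (use S in auto)
  then show ?thesis using e S(3) by (intro exI[of _ e]) (auto simp: measure_nonneg antisym)
qed

lemma null_const:
  assumes "measure M {a<..<b} = 0" "u \<in> {a<..<b}" "v \<in> {a<..<b}"
  shows "cdf M u = cdf M v"
proof -
  have *: "cdf M v = cdf M u" if "u < v" "u \<in> {a<..<b}" "v \<in> {a<..<b}" for u v
  proof -
    have "cdf M v - cdf M u = measure M {u<..v}" using cdf_diff_eq that by auto
    also have "\<dots> \<le> measure M {a<..<b}"
      by (rule finite_measure_mono) (use that in auto)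
    finally show ?thesis using assms(1) cdf_nondecreasing[of u v] that by auto
  qed
  show ?thesis using *[of u v] *[of v u] assms(2,3) by (cases u v rule: linorder_cases) auto
qed

lemma Q_supp: assumes "0 < t" "t < 1" shows "quantile_of M t \<in> supp_of M"
proof (rule ccontr)
  let ?z = "quantile_of M t"
  assume "?z \<notin> supp_of M"
  then obtain e where e: "e > 0" "measure M {?z-e<..<?z+e} = 0" using not_supp_null by blast
  have "?z \<notin> {?z-e<..<?z+e}"
    by (rule Q_gap[OF null_const[OF e(2)] assms]) auto
  then show False using e by auto
qed

lemma Q_meas: "quantile_of M \<in> borel_measurable \<Omega>"
  using borel_measurable_mono_on_fnc[OF Q_mono] measurable_cong_sets[OF sets_Omega refl] by blast

end


context cdf_distribution begin

lemma I_le_Q: assumes "0 < t" "t < 1" shows "I t \<le> quantile_of M t"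
proof (rule ccontr)
  assume "\<not> ?thesis"
  then have "quantile_of M t < I t" by simp
  then obtain x where x: "quantile_of M t < x" "x < I t" using dense by blast
  have "cdf M x > t" using Q_gt[OF assms x(1)] .
  then have "I t \<le> x" using pseudoinverse[of t x] assms by simp
  then show False using x by simp
qed

lemma Q_le_I: assumes "0 < t" "t < t'" "t' < 1" shows "quantile_of M t \<le> I t'"
  unfolding quantile_of_def cdf_of_eq
proof (rule cSup_least)
  show "{x. cdf M x \<le> t} \<noteq> {}" using S_ne[OF assms(1)] by auto
  fix x assume "x \<in> {x. cdf M x \<le> t}"
  then have "\<not> t' \<le> cdf M x" using assms by auto
  then have "\<not> I t' \<le> x" using pseudoinverse[of t' x] assms by simp
  then show "x \<le> I t'" by simp
qed

end

context cdf_distribution begin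

lemma Q_eq_I: assumes "0 < t" "t < 1" "isCont I t" shows "quantile_of M t = I t"
proof -
  have lim: "(I \<longlongrightarrow> I t) (at_right t)"
    using assms(3) by (simp add: isCont_def filterlim_at_split)
  have ev: "eventually (\<lambda>t'. quantile_of M t \<le> I t') (at_right t)"
    unfolding eventually_at_right_field
    by (rule exI[of _ 1]) (use assms Q_le_I in auto)
  have "quantile_of M t \<le> I t"
    by (rule tendsto_lowerbound[OF lim ev]) simp
  then show ?thesis using I_le_Q[OF assms(1,2)] by simp
qed

lemma AE_Q_I: "AE t in \<Omega>. quantile_of M t = I t"
proof -
  have c: "countable {a\<in>{0<..<1::real}. \<not> isCont I a}"
    by (rule mono_on_ctble_discont_open) (simp, rule mono_I)
  have "AE t in lborel. t \<notin> {a\<in>{0<..<1::real}. \<not> isCont I a}"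
    by (rule AE_not_in[OF countable_imp_null_set_lborel[OF c]])
  then have "AE t in lborel. t \<in> {0<..<1} \<longrightarrow> quantile_of M t = I t"
    by (rule eventually_mono) (use Q_eq_I in auto)
  then show ?thesis by (subst AE_restrict_space_iff) auto
qed

end

context cdf_distribution begin

lemma integrable_Q:
  fixes g :: "real \<Rightarrow> real"
  assumes g: "g \<in> borel_measurable borel" and int: "integrable M g"
  shows "integrable \<Omega> (\<lambda>t. g (quantile_of M t))"
proof -
  have Imeas: "I \<in> measurable \<Omega> borel"
    using measurable_CI measurable_cong_sets[OF sets_Omega refl] by blast
  have "integrable (distr \<Omega> borel I) g" using distr_I_eq_M int by simp
  then have i1: "integrable \<Omega> (\<lambda>t. g (I t))" using integrable_distr_eq[OF Imeas g] by simp
  have ae: "AE t in \<Omega>. g (I t) = g (quantile_of M t)"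
    using AE_Q_I by (rule eventually_mono) simp
  have m1: "(\<lambda>t. g (quantile_of M t)) \<in> borel_measurable \<Omega>"
    using measurable_compose[OF Q_meas g] .
  have m2: "(\<lambda>t. g (I t)) \<in> borel_measurable \<Omega>"
    using measurable_compose[OF Imeas g] .
  show ?thesis using integrable_cong_AE[OF m2 m1 ae] i1 by simp
qed

end


lemma sa_borel: "sigma_algebra UNIV (sets (borel::real measure))"
  using sets.sigma_algebra_axioms[of "borel::real measure"] by simp

lemma sets_delta[simp]: "sets (delta_meas n p x) = sets borel"
  unfolding delta_meas_def using sigma_algebra.sets_measure_of_eq[OF sa_borel] by simp

lemma space_delta[simp]: "space (delta_meas n p x) = UNIV"
  unfolding delta_meas_def using sigma_algebra.space_measure_of_eq[OF sa_borel] by simp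

lemma emeasure_delta:
  assumes "A \<in> sets borel"
  shows "emeasure (delta_meas n p x) A = (\<Sum>i=1..n. ennreal (p i) * indicator A (x i))"
  unfolding delta_meas_def
proof (rule emeasure_measure_of_sigma[OF sa_borel _ _ assms])
  show "positive (sets borel) (\<lambda>A. \<Sum>i = 1..n. ennreal (p i) * indicator A (x i))"
    by (simp add: positive_def)
  show "countably_additive (sets borel) (\<lambda>A. \<Sum>i = 1..n. ennreal (p i) * indicator A (x i))"
  proof (rule countably_additiveI)
    fix A :: "nat \<Rightarrow> real set" assume A: "range A \<subseteq> sets borel" "disjoint_family A"
    have "(\<Sum>j. \<Sum>i = 1..n. ennreal (p i) * indicator (A j) (x i))
        = (\<Sum>i = 1..n. \<Sum>j. ennreal (p i) * indicator (A j) (x i))"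
      by (rule suminf_sum) (rule summableI)
    also have "\<dots> = (\<Sum>i = 1..n. ennreal (p i) * indicator (\<Union>j. A j) (x i))"
      using suminf_indicator[OF A(2)] by simp
    finally show "(\<Sum>j. \<Sum>i = 1..n. ennreal (p i) * indicator (A j) (x i))
        = (\<Sum>i = 1..n. ennreal (p i) * indicator (\<Union>j. A j) (x i))" .
  qed
qed

lemma rd_delta:
  assumes p: "p \<in> Pi_simplex n"
  shows "real_distribution (delta_meas n p x)"
proof -
  have "emeasure (delta_meas n p x) UNIV = (\<Sum>i=1..n. ennreal (p i))"
    using emeasure_delta[of UNIV] by simp
  also have "\<dots> = ennreal (\<Sum>i=1..n. p i)"
    using p by (subst sum_ennreal) (auto simp: Pi_simplex_def)
  also have "\<dots> = 1" using p by (simp add: Pi_simplex_def)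
  finally have "emeasure (delta_meas n p x) (space (delta_meas n p x)) = 1" by simp
  then have "prob_space (delta_meas n p x)" by (rule prob_spaceI)
  then show ?thesis unfolding real_distribution_def real_distribution_axioms_def by simp
qed

lemma cdf_delta:
  assumes p: "p \<in> Pi_simplex n"
  shows "cdf (delta_meas n p x) u = (\<Sum>i=1..n. p i * indicator {..u} (x i))"
proof -
  have "emeasure (delta_meas n p x) {..u} = (\<Sum>i=1..n. ennreal (p i) * indicator {..u} (x i))"
    by (rule emeasure_delta) simp
  also have "\<dots> = (\<Sum>i=1..n. ennreal (p i * indicator {..u} (x i)))"
    using p by (intro sum.cong refl) (auto simp: Pi_simplex_def indicator_def)
  also have "\<dots> = ennreal (\<Sum>i=1..n. p i * indicator {..u} (x i))"
    using p by (subst sum_ennreal) (auto simp: Pi_simplex_def indicator_def)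
  finally have e: "emeasure (delta_meas n p x) {..u} = ennreal (\<Sum>i=1..n. p i * indicator {..u} (x i))" .
  have nn: "0 \<le> (\<Sum>i=1..n. p i * indicator {..u} (x i))"
    using p by (auto simp: Pi_simplex_def indicator_def intro!: sum_nonneg)
  show ?thesis unfolding cdf_def measure_def e using nn by simp
qed



lemma supp_pos:
  assumes rd: "real_distribution M" and y: "y \<in> supp_of M" and e: "e > 0"
  shows "measure M {y-e<..<y+e} > 0"
proof (rule ccontr)
  interpret real_distribution M by (rule rd)
  assume "\<not> ?thesis"
  then have z: "measure M {y-e<..<y+e} = 0" using measure_nonneg[of M] by (meson antisym not_le)
  define S where "S = - {y-e<..<y+e}"
  have "closed S" unfolding S_def by (auto intro: open_greaterThanLessThan)
  moreover have "S \<in> sets M" unfolding S_def by simp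
  moreover have "measure M (space M - S) = 0" using z by (simp add: S_def)
  ultimately have "supp_of M \<subseteq> S" unfolding supp_of_def by blast
  then show False using y e by (auto simp: S_def)
qed

lemma powr_diff_bound:
  fixes a b A r :: real
  assumes "\<bar>a\<bar> \<le> A" "r \<ge> 0"
  shows "\<bar>a - b\<bar> powr r \<le> 2 powr r * (A powr r + \<bar>b\<bar> powr r)"
proof -
  have A0: "A \<ge> 0" using assms by linarith
  have "\<bar>a - b\<bar> \<le> 2 * max A \<bar>b\<bar>" using assms by (auto simp: max_def)
  then have "\<bar>a - b\<bar> powr r \<le> (2 * max A \<bar>b\<bar>) powr r" by (rule powr_mono2[OF assms(2) abs_ge_zero])
  also have "\<dots> = 2 powr r * (max A \<bar>b\<bar>) powr r" using A0 by (simp add: powr_mult)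
  also have "(max A \<bar>b\<bar>) powr r \<le> A powr r + \<bar>b\<bar> powr r" by (auto simp: max_def)
  finally show ?thesis by simp
qed

lemma Qdelta_bound:
  assumes p: "p \<in> Pi_simplex n" and t: "0 < t" "t < 1"
  shows "\<bar>quantile_of (delta_meas n p x) t\<bar> \<le> (\<Sum>i=1..n. \<bar>x i\<bar>) + 1"
proof -
  interpret real_distribution "delta_meas n p x" by (rule rd_delta[OF p])
  let ?B = "\<Sum>i=1..n. \<bar>x i\<bar>"
  have xb: "\<bar>x i\<bar> \<le> ?B" if "i \<in> {1..n}" for i
    using member_le_sum[of i "{1..n}" "\<lambda>i. \<bar>x i\<bar>"] that by auto
  have xb1: "x i \<le> ?B" "- ?B - 1 < x i" if "i \<in> {1..n}" for i
    using xb[OF that] by linarith+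
  have "cdf (delta_meas n p x) ?B = (\<Sum>i=1..n. p i)"
    unfolding cdf_delta[OF p] using xb1 by (intro sum.cong refl) (auto simp: indicator_def)
  then have "cdf (delta_meas n p x) ?B > t" using p t by (simp add: Pi_simplex_def)
  then have up: "quantile_of (delta_meas n p x) t \<le> ?B" using Q_le t by blast
  have "cdf (delta_meas n p x) (- ?B - 1) = 0"
    unfolding cdf_delta[OF p] using xb1 by (intro sum.neutral) (force simp: indicator_def)
  then have "- ?B - 1 \<le> quantile_of (delta_meas n p x) t" using Q_ge t by simp
  with up show ?thesis by simp
qed



lemma fm_Omega: "finite_measure \<Omega>"
  by (rule finite_measureI) (simp add: space_restrict_space emeasure_restrict_space)

lemma space_Omega[simp]: "space \<Omega> = {0<..<1}"
  by (simp add: space_restrict_space)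

lemma integrable_h:
  assumes rd: "real_distribution M" and int: "integrable M (\<lambda>x. \<bar>x\<bar> powr r)" and r: "r \<ge> 0"
    and p: "p \<in> Pi_simplex n"
  shows "integrable \<Omega> (\<lambda>t. \<bar>quantile_of (delta_meas n p x) t - quantile_of M t\<bar> powr r)"
proof -
  interpret cdf_distribution M using rd by (simp add: cdf_distribution_def)
  interpret D: real_distribution "delta_meas n p x" by (rule rd_delta[OF p])
  interpret O: finite_measure \<Omega> by (rule fm_Omega)
  define B where "B = (\<Sum>i=1..n. \<bar>x i\<bar>) + 1"
  have iQ: "integrable \<Omega> (\<lambda>t. \<bar>quantile_of M t\<bar> powr r)"
    by (rule integrable_Q[OF _ int]) measurable
  have iF: "integrable \<Omega> (\<lambda>t. 2 powr r * (B powr r + \<bar>quantile_of M t\<bar> powr r))"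
    using iQ by (intro integrable_mult_right integrable_add) auto
  have meas: "(\<lambda>t. \<bar>quantile_of (delta_meas n p x) t - quantile_of M t\<bar> powr r) \<in> borel_measurable \<Omega>"
    using D.Q_meas Q_meas by measurable
  show ?thesis
  proof (rule Bochner_Integration.integrable_bound[OF iF meas], rule AE_I2)
    fix t assume "t \<in> space \<Omega>"
    then have t: "0 < t" "t < 1" by auto
    have "\<bar>quantile_of (delta_meas n p x) t - quantile_of M t\<bar> powr r
        \<le> 2 powr r * (B powr r + \<bar>quantile_of M t\<bar> powr r)"
      by (rule powr_diff_bound[OF _ r]) (use Qdelta_bound[OF p t] in \<open>simp add: B_def\<close>)
    then show "norm (\<bar>quantile_of (delta_meas n p x) t - quantile_of M t\<bar> powr r)
        \<le> norm (2 powr r * (B powr r + \<bar>quantile_of M t\<bar> powr r))"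
      by simp
  qed
qed



lemma lower_dist:
  assumes rd: "real_distribution M" and int: "integrable M (\<lambda>x. \<bar>x\<bar> powr r)" and r: "r \<ge> 1"
    and e: "e > 0" and p: "p \<in> Pi_simplex n" and far: "\<And>i. i \<in> {1..n} \<Longrightarrow> e \<le> \<bar>y - x i\<bar>"
  shows "((e/2) powr r * (cdf M (y+e/2) - cdf M (y-e/2))) powr (1/r) \<le> dist_r r (delta_meas n p x) M"
proof -
  interpret real_distribution M by (rule rd)
  interpret D: real_distribution "delta_meas n p x" by (rule rd_delta[OF p])
  define a where "a = cdf M (y-e/2)"
  define c where "c = cdf M (y+e/2)"
  have a0: "0 \<le> a" unfolding a_def by (rule cdf_nonneg)
  have c1: "c \<le> 1" unfolding c_def by (rule cdf_bounded_prob)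
  have ac: "a \<le> c" unfolding a_def c_def by (rule cdf_nondecreasing) (use e in auto)
  let ?h = "\<lambda>t. \<bar>quantile_of (delta_meas n p x) t - quantile_of M t\<bar> powr r"
  have ih: "integrable \<Omega> ?h" by (rule integrable_h[OF rd int _ p]) (use r in auto)
  have pt: "(e/2) powr r * indicator {a<..<c} t \<le> ?h t" if t: "0 < t" "t < 1" for t
  proof (cases "t \<in> {a<..<c}")
    case False then show ?thesis by simp
  next
    case True
    have q1: "y - e/2 \<le> quantile_of M t" by (rule Q_ge[OF t]) (use True a_def in auto)
    have q2: "quantile_of M t \<le> y + e/2" by (rule Q_le[OF t]) (use True c_def in auto)
    have const: "cdf (delta_meas n p x) u = cdf (delta_meas n p x) v"
      if "u \<in> {y-e<..<y+e}" "v \<in> {y-e<..<y+e}" for u v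
      unfolding cdf_delta[OF p]
    proof (intro sum.cong refl)
      fix i assume "i \<in> {1..n}"
      then have "e \<le> \<bar>y - x i\<bar>" by (rule far)
      then have "x i \<le> u \<longleftrightarrow> x i \<le> v" using that by auto
      then show "p i * indicator {..u} (x i) = p i * indicator {..v} (x i)" by (simp add: indicator_def)
    qed
    have "quantile_of (delta_meas n p x) t \<notin> {y-e<..<y+e}" by (rule D.Q_gap[OF const t])
    then have "e/2 \<le> \<bar>quantile_of (delta_meas n p x) t - quantile_of M t\<bar>" using q1 q2 by auto
    then have "(e/2) powr r \<le> ?h t" using r e by (intro powr_mono2) auto
    then show ?thesis using True by simp
  qed
  have "integral\<^sup>L \<Omega> (\<lambda>t. (e/2) powr r * indicator {a<..<c} t) \<le> integral\<^sup>L \<Omega> ?h"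
    by (rule integral_mono_AE'[OF ih]) (auto intro!: AE_I2 pt)
  moreover have "integral\<^sup>L \<Omega> (\<lambda>t. (e/2) powr r * indicator {a<..<c} t) = (e/2) powr r * (c - a)"
  proof -
    have sub: "{a<..<c} \<subseteq> {0<..<1}" using a0 c1 by auto
    have "integral\<^sup>L \<Omega> (\<lambda>t. (e/2) powr r * indicator {a<..<c} t) = (e/2) powr r * measure \<Omega> ({a<..<c} \<inter> {0<..<1})"
      by simp
    also have "\<dots> = (e/2) powr r * measure lborel {a<..<c}"
    proof -
      have i: "{a<..<c} \<inter> {0<..<1} = {a<..<c}" using sub by auto
      have "measure \<Omega> {a<..<c} = measure lborel {a<..<c}"
        using sub by (subst measure_restrict_space) auto
      then show ?thesis by (simp only: i)
    qed
    also have "\<dots> = (e/2) powr r * (c - a)" using ac by simp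
    finally show ?thesis .
  qed
  ultimately have "(e/2) powr r * (c - a) \<le> integral\<^sup>L \<Omega> ?h" by linarith
  then have "((e/2) powr r * (c - a)) powr (1/r) \<le> (integral\<^sup>L \<Omega> ?h) powr (1/r)"
    using r ac by (intro powr_mono2) auto
  then show ?thesis unfolding dist_r_def LINT_eq a_def c_def .
qed

lemma Pi_ne: "n \<ge> 1 \<Longrightarrow> Pi_simplex n \<noteq> {}"
proof -
  assume n: "n \<ge> 1"
  have "(\<lambda>i. if i = 1 then 1 else 0 :: real) \<in> Pi_simplex n"
    unfolding Pi_simplex_def using n by (auto simp: sum.delta)
  then show ?thesis by blast
qed

lemma dist_nonneg: "dist_r r M N \<ge> 0" by (simp add: dist_r_def)

lemma lower_best:
  assumes rd: "real_distribution M" and int: "integrable M (\<lambda>x. \<bar>x\<bar> powr r)" and r: "r \<ge> 1"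
    and e: "e > 0" and n: "n \<ge> 1" and far: "\<And>i. i \<in> {1..n} \<Longrightarrow> e \<le> \<bar>y - x i\<bar>"
  shows "((e/2) powr r * (cdf M (y+e/2) - cdf M (y-e/2))) powr (1/r) \<le> dist_r_best r n x M"
  unfolding dist_r_best_def
  by (rule cINF_greatest[OF Pi_ne[OF n]]) (rule lower_dist[OF rd int r e _ far])



definition Fm :: "real measure \<Rightarrow> nat \<Rightarrow> (nat \<Rightarrow> real) \<Rightarrow> nat \<Rightarrow> real" where
  "Fm M n x i = (if i = 0 then 0 else if n \<le> i then 1 else cdf M ((x i + x (Suc i)) / 2))"

definition pp :: "real measure \<Rightarrow> nat \<Rightarrow> (nat \<Rightarrow> real) \<Rightarrow> nat \<Rightarrow> real" where
  "pp M n x i = Fm M n x i - Fm M n x (i - 1)"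

lemma tele: "(\<Sum>i=1..k. pp M n x i) = Fm M n x k"
proof (induction k)
  case 0 then show ?case by (simp add: Fm_def)
next
  case (Suc k) then show ?case by (simp add: pp_def)
qed

lemma sumind:
  fixes f :: "nat \<Rightarrow> real"
  assumes "k \<le> n" shows "(\<Sum>i=1..n. f i * indicator {..k} i) = (\<Sum>i=1..k. f i)"
proof -
  have "(\<Sum>i=1..n. f i * indicator {..k} i) = (\<Sum>i\<in>{1..n}. if i \<in> {..k} then f i else 0)"
    by (intro sum.cong) (auto simp: indicator_def)
  also have "\<dots> = (\<Sum>i\<in>{1..n} \<inter> {..k}. f i)" by (simp only: sum.inter_restrict[OF finite_atLeastAtMost])
  also have "{1..n} \<inter> {..k} = {1..k}" using assms by auto
  finally show ?thesis .
qed

lemma pp_nonneg: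
  assumes rd: "real_distribution M" and x: "x \<in> Xi n" and i: "i \<in> {1..n}"
  shows "pp M n x i \<ge> 0"
proof -
  interpret real_distribution M by (rule rd)
  have c01: "0 \<le> cdf M u" "cdf M u \<le> 1" for u using cdf_nonneg cdf_bounded_prob by auto
  show ?thesis
  proof (cases "i = 1")
    case True then show ?thesis using c01 by (auto simp: pp_def Fm_def)
  next
    case False
    then have i2: "i \<ge> 2" using i by auto
    show ?thesis
    proof (cases "n \<le> i")
      case True then show ?thesis using c01 i2 by (auto simp: pp_def Fm_def)
    next
      case False
      have "x (i - 1) \<le> x i" "x i \<le> x (Suc i)" using x i2 False unfolding Xi_def by auto
      then have "(x (i - 1) + x (Suc (i - 1))) / 2 \<le> (x i + x (Suc i)) / 2" using i2 by simp
      then have "cdf M ((x (i - 1) + x (Suc (i - 1))) / 2) \<le> cdf M ((x i + x (Suc i)) / 2)"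
        by (rule cdf_nondecreasing)
      then show ?thesis using False i2 by (auto simp: pp_def Fm_def)
    qed
  qed
qed

lemma pp_Pi:
  assumes rd: "real_distribution M" and x: "x \<in> Xi n" and n: "n \<ge> 1"
  shows "pp M n x \<in> Pi_simplex n"
  unfolding Pi_simplex_def using pp_nonneg[OF rd x] tele[where k=n and M=M and n=n and x=x] n by (auto simp: Fm_def)

lemma cdf_le_Fm:
  assumes rd: "real_distribution M" and x: "x \<in> Xi n" and n: "n \<ge> 1" and k: "k \<le> n"
    and h: "\<And>i. i \<in> {1..n} \<Longrightarrow> x i \<le> u \<Longrightarrow> i \<le> k"
  shows "cdf (delta_meas n (pp M n x) x) u \<le> Fm M n x k"
proof -
  have "cdf (delta_meas n (pp M n x) x) u = (\<Sum>i=1..n. pp M n x i * indicator {..u} (x i))"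
    by (rule cdf_delta[OF pp_Pi[OF rd x n]])
  also have "\<dots> \<le> (\<Sum>i=1..n. pp M n x i * indicator {..k} i)"
    using h pp_nonneg[OF rd x] by (intro sum_mono) (auto simp: indicator_def)
  also have "\<dots> = Fm M n x k" using sumind[OF k] tele by simp
  finally show ?thesis .
qed

lemma cdf_ge_Fm:
  assumes rd: "real_distribution M" and x: "x \<in> Xi n" and n: "n \<ge> 1" and k: "k \<le> n"
    and h: "\<And>i. i \<in> {1..n} \<Longrightarrow> i \<le> k \<Longrightarrow> x i \<le> u"
  shows "Fm M n x k \<le> cdf (delta_meas n (pp M n x) x) u"
proof -
  have "Fm M n x k = (\<Sum>i=1..n. pp M n x i * indicator {..k} i)"
    using sumind[OF k] tele by simp
  also have "\<dots> \<le> (\<Sum>i=1..n. pp M n x i * indicator {..u} (x i))"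
    using h pp_nonneg[OF rd x] by (intro sum_mono) (auto simp: indicator_def)
  also have "\<dots> = cdf (delta_meas n (pp M n x) x) u"
    by (rule cdf_delta[OF pp_Pi[OF rd x n], symmetric])
  finally show ?thesis .
qed



lemma Qp_close:
  assumes rd: "real_distribution M" and x: "x \<in> Xi n" and n: "n \<ge> 1" and t: "0 < t" "t < 1"
  shows "\<bar>quantile_of (delta_meas n (pp M n x) x) t - quantile_of M t\<bar>
          \<le> Min ((\<lambda>i. \<bar>quantile_of M t - x i\<bar>) ` {1..n})"
proof -
  interpret real_distribution M by (rule rd)
  interpret D: real_distribution "delta_meas n (pp M n x) x" by (rule rd_delta[OF pp_Pi[OF rd x n]])
  define q where "q = quantile_of M t"
  define d where "d = Min ((\<lambda>i. \<bar>q - x i\<bar>) ` {1..n})"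
  have "d \<in> (\<lambda>i. \<bar>q - x i\<bar>) ` {1..n}" unfolding d_def using n by (intro Min_in) auto
  then obtain j where j: "j \<in> {1..n}" "d = \<bar>q - x j\<bar>" by auto
  have srt: "x i \<le> x i'" if "1 \<le> i" "i \<le> i'" "i' \<le> n" for i i'
    using x that unfolding Xi_def by auto
  let ?Q = "quantile_of (delta_meas n (pp M n x) x) t"
  define U where "U = {i\<in>{1..n}. x i \<le> q + d}"
  have jU: "j \<in> U" using j by (auto simp: U_def)
  have fU: "finite U" by (simp add: U_def)
  define iS where "iS = Max U"
  have isU: "iS \<in> U" unfolding iS_def using fU jU by (intro Max_in) auto
  have jis: "j \<le> iS" unfolding iS_def using fU jU by simp
  have Fis: "Fm M n x iS > t"
  proof (cases "n \<le> iS")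
    case True then show ?thesis using isU t by (auto simp: Fm_def U_def)
  next
    case False
    have "Suc iS \<notin> U" using fU unfolding iS_def by (metis Max_ge Suc_n_not_le_n)
    then have a: "x (Suc iS) > q + d" using False isU by (auto simp: U_def)
    have "x iS \<ge> x j" using srt[of j iS] j jis isU by (auto simp: U_def)
    moreover have "x j \<ge> q - d" using j by auto
    ultimately have "(x iS + x (Suc iS)) / 2 > q" using a by simp
    then have "cdf M ((x iS + x (Suc iS)) / 2) > t" using Q_gt[OF t] by (simp add: q_def)
    then show ?thesis using False isU by (auto simp: Fm_def U_def)
  qed
  have "Fm M n x iS \<le> cdf (delta_meas n (pp M n x) x) (x iS)"
    by (rule cdf_ge_Fm[OF rd x n]) (use isU srt in \<open>auto simp: U_def\<close>)
  then have "?Q \<le> x iS" using Fis D.Q_le[OF t] by simp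
  then have up: "?Q \<le> q + d" using isU by (auto simp: U_def)
  define L where "L = {i\<in>{1..n}. q - d \<le> x i}"
  have jL: "j \<in> L" using j by (auto simp: L_def)
  have fL: "finite L" by (simp add: L_def)
  define il where "il = Min L"
  have ilL: "il \<in> L" unfolding il_def using fL jL by (intro Min_in) auto
  have ilj: "il \<le> j" unfolding il_def using fL jL by simp
  define k where "k = il - 1"
  have Fk: "Fm M n x k \<le> t"
  proof (cases "k = 0")
    case True then show ?thesis using t by (simp add: Fm_def)
  next
    case False
    then have k1: "k \<ge> 1" "k < n" "Suc k = il" using ilL by (auto simp: k_def L_def)
    have "k \<notin> L" using fL k1 unfolding il_def by (metis Min_le Suc_n_not_le_n)
    then have a: "x k < q - d" using k1 by (auto simp: L_def)
    have "x (Suc k) \<le> x j" using srt[of il j] j ilj ilL k1 by (auto simp: L_def)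
    moreover have "x j \<le> q + d" using j by auto
    ultimately have "(x k + x (Suc k)) / 2 < q" using a by simp
    then have "cdf M ((x k + x (Suc k)) / 2) \<le> t" using Q_lt[OF t] by (simp add: q_def)
    then show ?thesis using False k1 by (auto simp: Fm_def)
  qed
  have lowu: "u \<le> ?Q" if u: "u < x il" for u
  proof -
    have "cdf (delta_meas n (pp M n x) x) u \<le> Fm M n x k"
    proof (rule cdf_le_Fm[OF rd x n])
      show "k \<le> n" using ilL by (auto simp: k_def L_def)
      fix i assume i: "i \<in> {1..n}" "x i \<le> u"
      show "i \<le> k"
      proof (rule ccontr)
        assume "\<not> i \<le> k"
        then have "il \<le> i" by (simp add: k_def)
        then have "x il \<le> x i" using srt[of il i] ilL i by (auto simp: L_def)
        then show False using i u by simp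
      qed
    qed
    then show ?thesis using Fk D.Q_ge[OF t] by simp
  qed
  have "x il \<le> ?Q"
  proof (rule ccontr)
    assume "\<not> ?thesis"
    then obtain u where "?Q < u" "u < x il" using dense by (meson not_le)
    then show False using lowu by fastforce
  qed
  then have lo: "q - d \<le> ?Q" using ilL by (auto simp: L_def)
  show ?thesis using up lo unfolding q_def[symmetric] d_def[symmetric] by auto
qed



lemma Min_abs_nonneg: "finite A \<Longrightarrow> A \<noteq> {} \<Longrightarrow> 0 \<le> Min ((\<lambda>i. \<bar>f i :: real\<bar>) ` A)"
  by (simp add: Min_ge_iff)

lemma conv_back:
  assumes rd: "real_distribution M" and int: "integrable M (\<lambda>x. \<bar>x\<bar> powr r)" and r: "r \<ge> 1"
    and x: "\<And>n. x n \<in> Xi n"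
    and C: "\<forall>y\<in>supp_of M. (\<lambda>n. Min ((\<lambda>i. \<bar>y - x n i\<bar>) ` {1..n})) \<longlonglongrightarrow> 0"
  shows "(\<lambda>n. dist_r_best r n (x n) M) \<longlonglongrightarrow> 0"
proof -
  interpret cdf_distribution M using rd by (simp add: cdf_distribution_def)
  interpret O: finite_measure \<Omega> by (rule fm_Omega)
  have Qm[measurable]: "quantile_of M \<in> borel_measurable \<Omega>" by (rule Q_meas)
  define dn where "dn n q = Min ((\<lambda>i. \<bar>q - x n i\<bar>) ` {1..n})" for n q
  define y0 where "y0 = quantile_of M (1/2)"
  have y0: "y0 \<in> supp_of M" unfolding y0_def by (rule Q_supp) auto
  have "eventually (\<lambda>n. dn n y0 < 1) sequentially"
    using order_tendstoD(2)[OF C[rule_format, OF y0]] by (simp add: dn_def)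
  then obtain N0 where N0: "\<And>n. n \<ge> N0 \<Longrightarrow> dn n y0 < 1" by (auto simp: eventually_sequentially)
  define N where "N = max N0 1"
  define C0 where "C0 = \<bar>y0\<bar> + 1"
  have dn_nonneg: "0 \<le> dn n q" if "n \<ge> 1" for n q
    unfolding dn_def using that by (intro Min_abs_nonneg) auto
  have bound: "dn n q \<le> \<bar>q\<bar> + C0" if n: "n \<ge> N" for n q
  proof -
    have n1: "n \<ge> 1" "n \<ge> N0" using n by (auto simp: N_def)
    have "dn n y0 \<in> (\<lambda>i. \<bar>y0 - x n i\<bar>) ` {1..n}" unfolding dn_def using n1 by (intro Min_in) auto
    then obtain j where j: "j \<in> {1..n}" "dn n y0 = \<bar>y0 - x n j\<bar>" by auto
    have "dn n q \<le> \<bar>q - x n j\<bar>" unfolding dn_def using j by (intro Min_le) auto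
    also have "\<dots> \<le> \<bar>q - y0\<bar> + \<bar>y0 - x n j\<bar>" by simp
    finally show ?thesis using N0[OF n1(2)] j by (simp add: C0_def)
  qed
  define s where "s i t = (dn (i + N) (quantile_of M t)) powr r" for i t
  define w where "w t = 2 powr r * (C0 powr r + \<bar>quantile_of M t\<bar> powr r)" for t
  have iQ: "integrable \<Omega> (\<lambda>t. \<bar>quantile_of M t\<bar> powr r)"
    by (rule integrable_Q[OF _ int]) measurable
  have iw: "integrable \<Omega> w"
    unfolding w_def using iQ by (intro integrable_mult_right integrable_add) auto
  have sm: "s i \<in> borel_measurable \<Omega>" for i
    unfolding s_def dn_def by measurable
  have slim: "AE t in \<Omega>. (\<lambda>i. s i t) \<longlonglongrightarrow> 0"
  proof (rule AE_I2)
    fix t assume "t \<in> space \<Omega>"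
    then have "quantile_of M t \<in> supp_of M" by (intro Q_supp) auto
    then have "(\<lambda>n. dn n (quantile_of M t)) \<longlonglongrightarrow> 0" using C by (simp add: dn_def)
    then have l: "(\<lambda>i. dn (i + N) (quantile_of M t)) \<longlonglongrightarrow> 0" by (rule LIMSEQ_ignore_initial_segment[where k=N, simplified])
    show "(\<lambda>i. s i t) \<longlonglongrightarrow> 0" unfolding s_def
      by (rule tendsto_zero_powrI[OF l tendsto_const]) (use r dn_nonneg N_def in auto)
  qed
  have sb: "AE t in \<Omega>. norm (s i t) \<le> w t" for i
  proof (rule AE_I2)
    fix t
    have nn: "0 \<le> dn (i + N) (quantile_of M t)" by (rule dn_nonneg) (simp add: N_def)
    have "s i t \<le> (\<bar>quantile_of M t\<bar> + C0) powr r"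
      unfolding s_def using bound[of "i + N" "quantile_of M t"] nn r by (intro powr_mono2) auto
    also have "\<dots> = \<bar>C0 - (- \<bar>quantile_of M t\<bar>)\<bar> powr r" by (simp add: C0_def add.commute)
    also have "\<dots> \<le> w t" unfolding w_def
      using powr_diff_bound[where a=C0 and A=C0 and r=r and b="- \<bar>quantile_of M t\<bar>"] r by (simp add: C0_def)
    finally show "norm (s i t) \<le> w t" by (simp add: s_def)
  qed
  have si: "\<And>i. integrable \<Omega> (s i)"
    using integrable_dominated_convergence2[where f="\<lambda>_. 0::real" and w=w and s=s and M=\<Omega>, OF borel_measurable_const sm iw slim sb] .
  have "(\<lambda>i. integral\<^sup>L \<Omega> (s i)) \<longlonglongrightarrow> integral\<^sup>L \<Omega> (\<lambda>_. 0::real)"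
    using integral_dominated_convergence[where f="\<lambda>_. 0::real" and w=w and s=s and M=\<Omega>, OF borel_measurable_const sm iw slim sb] .
  then have il: "(\<lambda>i. integral\<^sup>L \<Omega> (s i)) \<longlonglongrightarrow> 0" by simp
  have ilp: "(\<lambda>i. (integral\<^sup>L \<Omega> (s i)) powr (1/r)) \<longlonglongrightarrow> 0"
    by (rule tendsto_zero_powrI[OF il tendsto_const])
       (use r in \<open>auto intro!: always_eventually integral_nonneg simp: s_def\<close>)
  have upper: "dist_r_best r (i + N) (x (i + N)) M \<le> (integral\<^sup>L \<Omega> (s i)) powr (1/r)" for i
  proof -
    define n where "n = i + N"
    have n1: "n \<ge> 1" by (simp add: n_def N_def)
    let ?p = "pp M n (x n)"
    have pP: "?p \<in> Pi_simplex n" by (rule pp_Pi[OF rd x n1])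
    have "dist_r_best r n (x n) M \<le> dist_r r (delta_meas n ?p (x n)) M"
      unfolding dist_r_best_def by (rule cINF_lower[OF _ pP]) (auto intro!: bdd_belowI[of _ 0] dist_nonneg)
    also have "\<dots> = (integral\<^sup>L \<Omega> (\<lambda>t. \<bar>quantile_of (delta_meas n ?p (x n)) t - quantile_of M t\<bar> powr r)) powr (1/r)"
      unfolding dist_r_def LINT_eq ..
    also have "\<dots> \<le> (integral\<^sup>L \<Omega> (s i)) powr (1/r)"
    proof (rule powr_mono2)
      show "0 \<le> 1 / r" using r by simp
      show "0 \<le> integral\<^sup>L \<Omega> (\<lambda>t. \<bar>quantile_of (delta_meas n ?p (x n)) t - quantile_of M t\<bar> powr r)"
        by (rule Bochner_Integration.integral_nonneg) simp
      show "integral\<^sup>L \<Omega> (\<lambda>t. \<bar>quantile_of (delta_meas n ?p (x n)) t - quantile_of M t\<bar> powr r)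
          \<le> integral\<^sup>L \<Omega> (s i)"
      proof (rule integral_mono_AE'[OF si])
        show "AE t in \<Omega>. 0 \<le> s i t" by (simp add: s_def)
        show "AE t in \<Omega>. \<bar>quantile_of (delta_meas n ?p (x n)) t - quantile_of M t\<bar> powr r \<le> s i t"
        proof (rule AE_I2)
          fix t assume "t \<in> space \<Omega>"
          then have t: "0 < t" "t < 1" by auto
          have "\<bar>quantile_of (delta_meas n ?p (x n)) t - quantile_of M t\<bar> \<le> dn n (quantile_of M t)"
            unfolding dn_def by (rule Qp_close[OF rd x n1 t])
          then show "\<bar>quantile_of (delta_meas n ?p (x n)) t - quantile_of M t\<bar> powr r \<le> s i t"
            unfolding s_def n_def[symmetric] using r by (intro powr_mono2) auto
        qed
      qed
    qed
    finally show ?thesis unfolding n_def .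
  qed
  have lower: "0 \<le> dist_r_best r (i + N) (x (i + N)) M" for i
    unfolding dist_r_best_def
    by (rule cINF_greatest[OF Pi_ne]) (auto simp: N_def dist_nonneg)
  have "(\<lambda>i. dist_r_best r (i + N) (x (i + N)) M) \<longlonglongrightarrow> 0"
    by (rule tendsto_sandwich[OF _ _ tendsto_const ilp]) (use upper lower in auto)
  then show ?thesis by (rule LIMSEQ_offset)
qed



lemma conv_fwd:
  assumes rd: "real_distribution M" and int: "integrable M (\<lambda>x. \<bar>x\<bar> powr r)" and r: "r \<ge> 1"
    and L: "(\<lambda>n. dist_r_best r n (x n) M) \<longlonglongrightarrow> 0" and y: "y \<in> supp_of M"
  shows "(\<lambda>n. Min ((\<lambda>i. \<bar>y - x n i\<bar>) ` {1..n})) \<longlonglongrightarrow> 0"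
proof (rule order_tendstoI)
  fix a :: real assume "a < 0"
  then show "eventually (\<lambda>n. a < Min ((\<lambda>i. \<bar>y - x n i\<bar>) ` {1..n})) sequentially"
    unfolding eventually_sequentially
    by (intro exI[of _ 1] allI impI, rule less_le_trans[OF _ Min_abs_nonneg]) auto
next
  fix e :: real assume e: "e > 0"
  interpret real_distribution M by (rule rd)
  interpret finite_borel_measure M by (rule finite_borel_measure_M)
  define c where "c = ((e/2) powr r * (cdf M (y+e/2) - cdf M (y-e/2))) powr (1/r)"
  have "cdf M (y+e/2) - cdf M (y-e/2) = measure M {y-e/2<..y+e/2}"
    by (rule cdf_diff_eq) (use e in auto)
  also have "\<dots> \<ge> measure M {y-e/2<..<y+e/2}"
    by (rule finite_measure_mono) auto
  finally have "cdf M (y+e/2) - cdf M (y-e/2) > 0" using supp_pos[OF rd y, of "e/2"] e by linarith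
  then have c: "c > 0" unfolding c_def using e by simp
  have "eventually (\<lambda>n. dist_r_best r n (x n) M < c) sequentially"
    by (rule order_tendstoD(2)[OF L c])
  moreover have "eventually (\<lambda>n. n \<ge> 1) sequentially" by (rule eventually_ge_at_top)
  ultimately show "eventually (\<lambda>n. Min ((\<lambda>i. \<bar>y - x n i\<bar>) ` {1..n}) < e) sequentially"
  proof eventually_elim
    case (elim n)
    show ?case
    proof (rule ccontr)
      assume "\<not> ?case"
      then have far: "\<And>i. i \<in> {1..n} \<Longrightarrow> e \<le> \<bar>y - x n i\<bar>"
        using elim by (auto simp: Min_less_iff not_less)
      have "c \<le> dist_r_best r n (x n) M"
        unfolding c_def by (rule lower_best[OF rd int r e elim(2) far])
      then show False using elim by simp
    qed
  qed
qed

lemma gap_cond: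
  assumes rd: "real_distribution M" and x: "\<And>n. x n \<in> Xi n"
    and G: "(\<lambda>n. cdf_of M (x n 1) + Max ((\<lambda>i. x n (i + 1) - x n i) ` {1..n-1})
                + 1 - cdf_of M (x n n)) \<longlonglongrightarrow> 0"
    and y: "y \<in> supp_of M"
  shows "(\<lambda>n. Min ((\<lambda>i. \<bar>y - x n i\<bar>) ` {1..n})) \<longlonglongrightarrow> 0"
proof (rule order_tendstoI)
  fix a :: real assume "a < 0"
  then show "eventually (\<lambda>n. a < Min ((\<lambda>i. \<bar>y - x n i\<bar>) ` {1..n})) sequentially"
    unfolding eventually_sequentially
    by (intro exI[of _ 1] allI impI, rule less_le_trans[OF _ Min_abs_nonneg]) auto
next
  fix e :: real assume e: "e > 0"
  interpret real_distribution M by (rule rd)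
  define m where "m = measure M {y-e<..<y+e}"
  have m: "m > 0" unfolding m_def by (rule supp_pos[OF rd y e])
  have "eventually (\<lambda>n. cdf_of M (x n 1) + Max ((\<lambda>i. x n (i + 1) - x n i) ` {1..n-1})
                + 1 - cdf_of M (x n n) < min m e) sequentially"
    by (rule order_tendstoD(2)[OF G]) (use m e in simp)
  moreover have "eventually (\<lambda>n. n \<ge> 2) sequentially" by (rule eventually_ge_at_top)
  ultimately show "eventually (\<lambda>n. Min ((\<lambda>i. \<bar>y - x n i\<bar>) ` {1..n}) < e) sequentially"
  proof eventually_elim
    case (elim n)
    have srt: "x n i \<le> x n i'" if "1 \<le> i" "i \<le> i'" "i' \<le> n" for i i'
      using x[of n] that unfolding Xi_def by auto
    let ?g = "Max ((\<lambda>i. x n (i + 1) - x n i) ` {1..n-1})"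
    have gi: "x n (i + 1) - x n i \<le> ?g" if "i \<in> {1..n-1}" for i
      using that by (intro Max_ge) auto
    have "1 \<in> {1..n-1}" using elim(2) by auto
    from gi[OF this] have "x n (1 + 1) - x n 1 \<le> ?g" .
    moreover have "x n 1 \<le> x n (1 + 1)" using srt[of 1 "1 + 1"] elim(2) by auto
    ultimately have g0: "0 \<le> ?g" by linarith
    have c0: "0 \<le> cdf_of M (x n 1)" "cdf_of M (x n n) \<le> 1"
      unfolding cdf_of_eq by (auto simp: cdf_nonneg cdf_bounded_prob)
    have t1: "cdf_of M (x n 1) < m" and tg: "?g < e" and tn: "1 - cdf_of M (x n n) < m"
      using elim(1) g0 c0 by auto
    have mle: "m \<le> measure M A" if "{y-e<..<y+e} \<subseteq> A" "A \<in> sets borel" for A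
      unfolding m_def by (rule finite_measure_mono) (use that in auto)
    have x1: "x n 1 < y + e"
    proof (rule ccontr)
      assume "\<not> ?thesis"
      then have "m \<le> measure M {..x n 1}" by (intro mle) auto
      then show False using t1 by (simp add: cdf_of_def)
    qed
    have xn: "x n n > y - e"
    proof (rule ccontr)
      assume "\<not> ?thesis"
      then have "m \<le> measure M (space M - {..x n n})" by (intro mle) auto
      also have "\<dots> = 1 - measure M {..x n n}" by (rule prob_compl) simp
      finally show False using tn by (simp add: cdf_of_def)
    qed
    have "\<exists>i\<in>{1..n}. \<bar>y - x n i\<bar> < e"
    proof (cases "y \<le> x n 1")
      case True then show ?thesis using x1 elim(2) by (intro bexI[of _ 1]) auto
    next
      case False
      show ?thesis
      proof (cases "x n n \<le> y")
        case True then show ?thesis using xn elim(2) by (intro bexI[of _ n]) auto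
      next
        case False2: False
        define K where "K = {i\<in>{1..n}. x n i \<le> y}"
        have fK: "finite K" and oneK: "1 \<in> K" using False elim(2) by (auto simp: K_def)
        define k where "k = Max K"
        have kK: "k \<in> K" unfolding k_def using fK oneK by (intro Max_in) auto
        have kn: "k < n" using kK False2 by (auto simp: K_def le_less)
        have "Suc k \<notin> K" using fK unfolding k_def by (metis Max_ge Suc_n_not_le_n)
        then have "x n (k + 1) > y" using kn kK by (auto simp: K_def)
        moreover have "x n (k + 1) - x n k < e" using gi[of k] kK kn tg by (auto simp: K_def)
        ultimately show ?thesis using kK by (intro bexI[of _ k]) (auto simp: K_def)
      qed
    qed
    then obtain i where i: "i \<in> {1..n}" "\<bar>y - x n i\<bar> < e" by blast
    have "Min ((\<lambda>i. \<bar>y - x n i\<bar>) ` {1..n}) \<le> \<bar>y - x n i\<bar>" using i by (intro Min_le) auto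
    then show ?case using i(2) by linarith
  qed
qed

theorem theorem5p3:
  fixes r :: real and \<mu> :: "real measure" and x :: "nat \<Rightarrow> nat \<Rightarrow> real"
  assumes "r \<ge> 1"
    and "prob_moment r \<mu>"
    and "\<And>n. x n \<in> Xi n"
  shows "(((\<lambda>n. dist_r_best r n (x n) \<mu>) \<longlonglongrightarrow> 0) \<longleftrightarrow>
           (\<forall>y\<in>supp_of \<mu>. (\<lambda>n. Min ((\<lambda>i. \<bar>y - x n i\<bar>) ` {1..n})) \<longlonglongrightarrow> 0))
       \<and> ((\<lambda>n. cdf_of \<mu> (x n 1) + Max ((\<lambda>i. x n (i + 1) - x n i) ` {1..n-1})
                + 1 - cdf_of \<mu> (x n n)) \<longlonglongrightarrow> 0
          \<longrightarrow> (\<forall>y\<in>supp_of \<mu>. (\<lambda>n. Min ((\<lambda>i. \<bar>y - x n i\<bar>) ` {1..n})) \<longlonglongrightarrow> 0))"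
proof -
  have rd: "real_distribution \<mu>" and int: "integrable \<mu> (\<lambda>x. \<bar>x\<bar> powr r)"
    using assms(2) prob_real_rd unfolding prob_moment_def by auto
  show ?thesis
    using conv_fwd[OF rd int assms(1)] conv_back[OF rd int assms(1) assms(3)] gap_cond[OF rd assms(3)]
    by blast
qed


end
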